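(* Let $r,s\ge0$, $\Delta=(v(y_1),\dots,v(y_n))$, $F\subset\{1,\dots,n\}$ with $r+2s+|F|=|\Delta|-1$, and let $\mathcal{P}$ be a collection of conditions (points $P_1,\dots,P_{r+s}$ and lines $Q_j$, $j\in F$) in general position for $\mathrm{ev}_F$ on the closure of refined descendant curves and for the tropical descendant count below. Let $\alpha=(\alpha_1,\alpha_2,\dots)$ with $\alpha_i=\#\{j\in F: w(y_j)=i\}$, $I^\alpha=\prod_i i^{\alpha_i}$, $O_f=\{i\in F: w(y_i)\text{ odd}\}$, $O_n=\{i\notin F: w(y_i)\text{ odd}\}$. Then $$N^{desc}_{(r,s)}(1,\Delta,F,\mathcal{P})=\frac{\prod_{i\in O_f}w(y_i)}{\prod_{i\in O_n}w(y_i)}\;I^\alpha\;\widetilde N^{\mathrm{trop}}_{\Delta,(r,s,0,0,\dots)}(\alpha).$$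
   Context: Curves. An $(r,s)$-marked curve of degree $\Delta$ is $C=(\Gamma,h,x_1,\dots,x_{r+s})$ with $\Gamma$ a metric graph whose components are trees, $h:\Gamma\to\mathbb{R}^2$ continuous, affine with integral direction vectors on edges, balanced at vertices; $x_1,\dots,x_r$ (real) and $x_{r+1},\dots,x_{r+s}$ (complex) are contracted unbounded edges (markings), the other unbounded edges $y_1,\dots,y_n$ (labeled ends) have outward direction vectors $\Delta=(v(y_1),\dots,v(y_n))$. Weight $w(e)$ = gcd of coordinates of the direction vector. Mikhalkin multiplicity of a vertex with exactly three non-contracted edges of direction vectors $u,v,w$: $a=|\det(u,v)|$. $\mathcal{M}_{(r,s)}(\Delta)$ is the polyhedral complex of connected such curves. $\mathrm{ev}_F(C)=(h(x_1),\dots,h(x_{r+s}),(h(y_i))_{i\in F})\in(\mathbb{R}^2)^{r+s}\times\prod_{i\in F}\mathbb{R}^2/\langle v(y_i)\rangle$; general position means avoiding images of cells whose image has dimension $<2(r+s)+|F|$. $G(\Delta,F)$: permutations of $\{1,\dots,n\}$ fixing $F$ pointwise and preserving $v(y_i)$. Unoriented refined broccoli curve: vertices of types (I') 3-valent with real marking, $m_V(y)=1$; (II') 3-valent unmarked, $m_V(y)=\frac{y^{a/2}-y^{-a/2}}{y^{1/2}-y^{-1/2}}$; (III') 4-valent with complex marking, $m_V(y)=\frac{y^{a/2}+y^{-a/2}}{y^{1/2}+y^{-1/2}}$. End factors: $m_{y_i}(y)=\frac{y^{w(y_i)/2}+(-1)^{w(y_i)}y^{-w(y_i)/2}}{y^{1/2}+(-1)^{w(y_i)}y^{-1/2}}$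 for $i\in F$ and $m_{y_i}(y)=\frac{y^{w(y_i)/2}-(-1)^{w(y_i)}y^{-w(y_i)/2}}{w(y_i)(y^{1/2}-(-1)^{w(y_i)}y^{-1/2})}$ for $i\notin F$; $m_C(y)=\prod_i m_{y_i}(y)\prod_V m_V(y)$. Refined descendant curve: a curve in $\mathcal{M}_{(r,s)}(\Delta)$ whose real markings are each adjacent to a 3-valent vertex of $\Gamma$ and whose complex markings are each adjacent to a 4-valent vertex of $\Gamma$; for conditions in general position these coincide with the unoriented refined broccoli curves through them. $N^{desc}_{(r,s)}(y,\Delta,F,\mathcal{P})=\frac{1}{|G(\Delta,F)|}\sum_C m_C(y)$ over refined descendant curves $C$ with $\mathrm{ev}_F(C)=\mathcal P$. Tropical descendant invariant: with $m=r+s$ markings and $\mathbf{k}=(r,s,0,\dots)$, $\widetilde N^{\mathrm{trop}}_{\Delta,\mathbf{k}}(\alpha)=\frac{1}{I^\alpha}\frac{1}{|G(\Delta,F)|}\sum_C m^{desc}_C$, where the sum runs over connected rational $m$-marked tropical curves $C$ of degree $\Delta$ (all ends labeled) with $h(x_i)=P_i$, with $x_1,\dots,x_r$ adjacent to 3-valent vertices and $x_{r+1},\dots,x_{r+s}$ adjacent to 4-valent vertices of $\Gamma$, with $h(y_j)\in Q_j$ for $j\in F$, and all vertices not adjacent to a marking 3-valent; and $m^{desc}_C$ is the product of the Mikhalkin multiplicities of the 3-valent vertices not adjacent to a marking. *)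

theory Defs
  imports "HOL-Analysis.Analysis" "HOL-Combinatorics.Permutations"
begin

text \<open>Labels of the unbounded edges: X i (i < r+s) are the markings (contracted ends)
x_{i+1}, where X 0 .. X (r-1) are real and X r .. X (r+s-1) are complex markings;
Y j (j < n) are the labelled non-contracted ends y_{j+1}.  A degree is a map
Delta :: nat => int * int, Delta j = v(y_{j+1}).  Indices are 0-based.\<close>

datatype lab = X nat | Y nat

definition labs :: "nat \<Rightarrow> nat \<Rightarrow> lab set" where
  "labs m n = X ` {..<m} \<union> Y ` {..<n}"

text \<open>A curve: finite vertex set, bounded edges (2-element vertex sets), edge lengths,
attachment vertex of every unbounded edge, and the image h(V) of every vertex.
h is affine on edges, so it is determined by these data.\<close>

record curve =
  verts :: "nat set"
  edges :: "nat set set"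
  len :: "nat set \<Rightarrow> real"
  att :: "lab \<Rightarrow> nat"
  pos :: "nat \<Rightarrow> real \<times> real"

definition rvec :: "int \<times> int \<Rightarrow> real \<times> real" where
  "rvec v = (real_of_int (fst v), real_of_int (snd v))"

definition det2 :: "real \<times> real \<Rightarrow> real \<times> real \<Rightarrow> real" where
  "det2 u v = fst u * snd v - snd u * fst v"

definition integral_vec :: "real \<times> real \<Rightarrow> bool" where
  "integral_vec v \<longleftrightarrow> fst v \<in> \<int> \<and> snd v \<in> \<int>"

definition other :: "nat \<Rightarrow> nat set \<Rightarrow> nat" where
  "other u e = (THE v. v \<in> e \<and> v \<noteq> u)"

definition dir :: "curve \<Rightarrow> nat \<Rightarrow> nat set \<Rightarrow> real \<times> real" where
  "dir C u e = (1 / len C e) *\<^sub>R (pos C (other u e) - pos C u)"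

definition edges_at :: "curve \<Rightarrow> nat \<Rightarrow> nat set set" where
  "edges_at C u = {e \<in> edges C. u \<in> e}"

definition valence :: "nat \<Rightarrow> nat \<Rightarrow> curve \<Rightarrow> nat \<Rightarrow> nat" where
  "valence m n C u = card (edges_at C u) + card {l \<in> labs m n. att C l = u}"

definition adj :: "curve \<Rightarrow> (nat \<times> nat) set" where
  "adj C = {(u, v). {u, v} \<in> edges C}"

definition is_tree :: "curve \<Rightarrow> bool" where
  "is_tree C \<longleftrightarrow> finite (verts C) \<and> verts C \<noteq> {} \<and>
     (\<forall>e \<in> edges C. e \<subseteq> verts C \<and> card e = 2) \<and>
     (\<forall>u \<in> verts C. \<forall>v \<in> verts C. (u, v) \<in> (adj C)\<^sup>*) \<and>
     card (edges C) + 1 = card (verts C)"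

text \<open>C is a connected rational (m-marked, m = r+s) plane tropical curve of degree Delta
(with n ends): an element of M_{(r,s)}(Delta).  Abstract curves have no vertices
of valence \<le> 2.\<close>

definition is_curve :: "nat \<Rightarrow> nat \<Rightarrow> (nat \<Rightarrow> int \<times> int) \<Rightarrow> curve \<Rightarrow> bool" where
  "is_curve m n Delta C \<longleftrightarrow>
     is_tree C \<and>
     (\<forall>l \<in> labs m n. att C l \<in> verts C) \<and>
     (\<forall>e \<in> edges C. len C e > 0) \<and>
     (\<forall>e \<in> edges C. \<forall>u \<in> e. integral_vec (dir C u e)) \<and>
     (\<forall>u \<in> verts C.
        (\<Sum>e \<in> edges_at C u. dir C u e) +
        (\<Sum>j \<in> {j. j < n \<and> att C (Y j) = u}. rvec (Delta j)) = 0) \<and>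
     (\<forall>u \<in> verts C. valence m n C u \<ge> 3)"

definition iso :: "nat \<Rightarrow> nat \<Rightarrow> curve \<Rightarrow> curve \<Rightarrow> bool" where
  "iso m n C D \<longleftrightarrow> (\<exists>\<phi>. bij_betw \<phi> (verts C) (verts D) \<and>
     bij_betw (\<lambda>e. \<phi> ` e) (edges C) (edges D) \<and>
     (\<forall>e \<in> edges C. len D (\<phi> ` e) = len C e) \<and>
     (\<forall>l \<in> labs m n. att D l = \<phi> (att C l)) \<and>
     (\<forall>u \<in> verts C. pos D (\<phi> u) = pos C u))"

text \<open>Same combinatorial type (same cell of the moduli space)\<close>

definition same_type :: "nat \<Rightarrow> nat \<Rightarrow> curve \<Rightarrow> curve \<Rightarrow> bool" where
  "same_type m n C D \<longleftrightarrow> (\<exists>\<phi>. bij_betw \<phi> (verts C) (verts D) \<and>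
     bij_betw (\<lambda>e. \<phi> ` e) (edges C) (edges D) \<and>
     (\<forall>l \<in> labs m n. att D l = \<phi> (att C l)))"

text \<open>The combinatorial type of D is a face of (a degeneration of) that of C:
D arises from C by contracting some bounded edges.\<close>

definition degenerates :: "nat \<Rightarrow> nat \<Rightarrow> curve \<Rightarrow> curve \<Rightarrow> bool" where
  "degenerates m n C D \<longleftrightarrow> (\<exists>\<psi>. \<psi> ` verts C = verts D \<and>
     (\<forall>l \<in> labs m n. att D l = \<psi> (att C l)) \<and>
     (\<forall>e \<in> edges C. card (\<psi> ` e) = 1 \<or> \<psi> ` e \<in> edges D) \<and>
     (\<forall>e' \<in> edges D. \<exists>!e. e \<in> edges C \<and> \<psi> ` e = e'))"

definition sum_classes :: "nat \<Rightarrow> nat \<Rightarrow> curve set \<Rightarrow> (curve \<Rightarrow> real) \<Rightarrow> real" where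
  "sum_classes m n S f =
     (\<Sum>K \<in> S // {(C, D). C \<in> S \<and> D \<in> S \<and> iso m n C D}. f (SOME C. C \<in> K))"

text \<open>P i (i < r+s) are the points; for j in F the condition for the end Y j is the
point of R^2/<v(y_j)> represented by q j, i.e. the line q j + R v(y_j).\<close>

definition through :: "nat \<Rightarrow> nat \<Rightarrow> (nat \<Rightarrow> int \<times> int) \<Rightarrow> nat set \<Rightarrow>
    (nat \<Rightarrow> real \<times> real) \<Rightarrow> (nat \<Rightarrow> real \<times> real) \<Rightarrow> curve \<Rightarrow> bool" where
  "through m n Delta F P q C \<longleftrightarrow>
     (\<forall>i < m. pos C (att C (X i)) = P i) \<and>
     (\<forall>j \<in> F. \<exists>t::real. pos C (att C (Y j)) = q j + t *\<^sub>R rvec (Delta j))"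

text \<open>ev_F in coordinates: R^{2m} x prod_{j in F} R, where R^2/<v> is identified with R
via the linear isomorphism [p] |-> det(v, p).\<close>

definition evF :: "nat \<Rightarrow> (nat \<Rightarrow> int \<times> int) \<Rightarrow> nat set \<Rightarrow> curve \<Rightarrow> nat \<Rightarrow> real" where
  "evF m Delta F C k =
     (if k < 2 * m then
        (if even k then fst (pos C (att C (X (k div 2)))) else snd (pos C (att C (X (k div 2)))))
      else if k - 2 * m \<in> F then det2 (rvec (Delta (k - 2 * m))) (pos C (att C (Y (k - 2 * m))))
      else 0)"

definition cond_vec :: "nat \<Rightarrow> (nat \<Rightarrow> int \<times> int) \<Rightarrow> nat set \<Rightarrow>
    (nat \<Rightarrow> real \<times> real) \<Rightarrow> (nat \<Rightarrow> real \<times> real) \<Rightarrow> nat \<Rightarrow> real" where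
  "cond_vec m Delta F P q k =
     (if k < 2 * m then
        (if even k then fst (P (k div 2)) else snd (P (k div 2)))
      else if k - 2 * m \<in> F then det2 (rvec (Delta (k - 2 * m))) (q (k - 2 * m))
      else 0)"

definition aff_dim_ge :: "(nat \<Rightarrow> real) set \<Rightarrow> nat \<Rightarrow> bool" where
  "aff_dim_ge S k \<longleftrightarrow> (\<exists>x :: nat \<Rightarrow> nat \<Rightarrow> real. (\<forall>i \<le> k. x i \<in> S) \<and>
     (\<forall>c :: nat \<Rightarrow> real. (\<forall>t. (\<Sum>i \<in> {1..k}. c i * (x i t - x 0 t)) = 0) \<longrightarrow>
        (\<forall>i \<in> {1..k}. c i = 0)))"

definition marked_vertices :: "nat \<Rightarrow> curve \<Rightarrow> nat set" where
  "marked_vertices m C = (\<lambda>i. att C (X i)) ` {..<m}"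

definition refined_desc :: "nat \<Rightarrow> nat \<Rightarrow> nat \<Rightarrow> (nat \<Rightarrow> int \<times> int) \<Rightarrow> curve \<Rightarrow> bool" where
  "refined_desc r s n Delta C \<longleftrightarrow> is_curve (r + s) n Delta C \<and>
     (\<forall>i < r. valence (r + s) n C (att C (X i)) = 3) \<and>
     (\<forall>i. r \<le> i \<and> i < r + s \<longrightarrow> valence (r + s) n C (att C (X i)) = 4)"

definition trop_desc :: "nat \<Rightarrow> nat \<Rightarrow> nat \<Rightarrow> (nat \<Rightarrow> int \<times> int) \<Rightarrow> curve \<Rightarrow> bool" where
  "trop_desc r s n Delta C \<longleftrightarrow> refined_desc r s n Delta C \<and>
     (\<forall>u \<in> verts C - marked_vertices (r + s) C. valence (r + s) n C u = 3)"

text \<open>General position of the conditions for ev_F on the closure of the set of refined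
descendant curves: the closure is the union of the cells that are faces of cells of
refined descendant curves; P must avoid the ev_F-images of those cells whose image has
dimension < 2(r+s)+|F|.\<close>

definition general_position :: "nat \<Rightarrow> nat \<Rightarrow> nat \<Rightarrow> (nat \<Rightarrow> int \<times> int) \<Rightarrow> nat set \<Rightarrow>
    (nat \<Rightarrow> real \<times> real) \<Rightarrow> (nat \<Rightarrow> real \<times> real) \<Rightarrow> bool" where
  "general_position r s n Delta F P q \<longleftrightarrow>
     (\<forall>C. is_curve (r + s) n Delta C \<and>
          (\<exists>D. refined_desc r s n Delta D \<and> degenerates (r + s) n D C) \<and>
          \<not> aff_dim_ge (evF (r + s) Delta F `
                {D. is_curve (r + s) n Delta D \<and> same_type (r + s) n C D})
             (2 * (r + s) + card F)
        \<longrightarrow> evF (r + s) Delta F C \<noteq> cond_vec (r + s) Delta F P q)"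

definition weight :: "(nat \<Rightarrow> int \<times> int) \<Rightarrow> nat \<Rightarrow> nat" where
  "weight Delta j = nat (gcd (fst (Delta j)) (snd (Delta j)))"

definition flags :: "nat \<Rightarrow> (nat \<Rightarrow> int \<times> int) \<Rightarrow> curve \<Rightarrow> nat \<Rightarrow> (nat set + nat) set" where
  "flags n Delta C u = Inl ` {e \<in> edges_at C u. dir C u e \<noteq> 0} \<union>
                       Inr ` {j. j < n \<and> att C (Y j) = u}"

definition flag_dir :: "(nat \<Rightarrow> int \<times> int) \<Rightarrow> curve \<Rightarrow> nat \<Rightarrow> nat set + nat \<Rightarrow> real \<times> real" where
  "flag_dir Delta C u f = (case f of Inl e \<Rightarrow> dir C u e | Inr j \<Rightarrow> rvec (Delta j))"

text \<open>Mikhalkin multiplicity |det(u,v)| of a vertex with exactly three non-contracted edges\<close>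

definition mikh :: "nat \<Rightarrow> (nat \<Rightarrow> int \<times> int) \<Rightarrow> curve \<Rightarrow> nat \<Rightarrow> real" where
  "mikh n Delta C u = (THE a. \<exists>f g. f \<in> flags n Delta C u \<and> g \<in> flags n Delta C u \<and> f \<noteq> g \<and>
                         a = \<bar>det2 (flag_dir Delta C u f) (flag_dir Delta C u g)\<bar>)"

text \<open>Refined vertex multiplicities as functions of y > 0 (y^(1/2) = y powr (1/2))\<close>

definition qnum :: "real \<Rightarrow> real \<Rightarrow> real" where
  "qnum a y = (y powr (a/2) - y powr (-a/2)) / (y powr (1/2) - y powr (-1/2))"

definition qnum_plus :: "real \<Rightarrow> real \<Rightarrow> real" where
  "qnum_plus a y = (y powr (a/2) + y powr (-a/2)) / (y powr (1/2) + y powr (-1/2))"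

definition vert_mult :: "nat \<Rightarrow> nat \<Rightarrow> nat \<Rightarrow> (nat \<Rightarrow> int \<times> int) \<Rightarrow> curve \<Rightarrow> nat \<Rightarrow> real \<Rightarrow> real" where
  "vert_mult r s n Delta C u y =
     (if \<exists>i < r. att C (X i) = u then 1
      else if \<exists>i. r \<le> i \<and> i < r + s \<and> att C (X i) = u then qnum_plus (mikh n Delta C u) y
      else qnum (mikh n Delta C u) y)"

definition end_mult :: "(nat \<Rightarrow> int \<times> int) \<Rightarrow> nat set \<Rightarrow> nat \<Rightarrow> real \<Rightarrow> real" where
  "end_mult Delta F j y =
     (let w = real (weight Delta j); sg = (-1::real) ^ weight Delta j in
      if j \<in> F then (y powr (w/2) + sg * y powr (-w/2)) / (y powr (1/2) + sg * y powr (-1/2))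
      else (y powr (w/2) - sg * y powr (-w/2)) / (w * (y powr (1/2) - sg * y powr (-1/2))))"

definition curve_mult :: "nat \<Rightarrow> nat \<Rightarrow> nat \<Rightarrow> (nat \<Rightarrow> int \<times> int) \<Rightarrow> nat set \<Rightarrow> curve \<Rightarrow> real \<Rightarrow> real" where
  "curve_mult r s n Delta F C y =
     (\<Prod>j < n. end_mult Delta F j y) * (\<Prod>u \<in> verts C. vert_mult r s n Delta C u y)"

definition Gcard :: "nat \<Rightarrow> (nat \<Rightarrow> int \<times> int) \<Rightarrow> nat set \<Rightarrow> nat" where
  "Gcard n Delta F = card {\<sigma>. \<sigma> permutes {..<n} \<and> (\<forall>i \<in> F. \<sigma> i = i) \<and>
                             (\<forall>i < n. Delta (\<sigma> i) = Delta i)}"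

definition Ndesc :: "nat \<Rightarrow> nat \<Rightarrow> nat \<Rightarrow> (nat \<Rightarrow> int \<times> int) \<Rightarrow> nat set \<Rightarrow>
    (nat \<Rightarrow> real \<times> real) \<Rightarrow> (nat \<Rightarrow> real \<times> real) \<Rightarrow> real \<Rightarrow> real" where
  "Ndesc r s n Delta F P q y =
     1 / real (Gcard n Delta F) *
     sum_classes (r + s) n
       {C. refined_desc r s n Delta C \<and> through (r + s) n Delta F P q C}
       (\<lambda>C. curve_mult r s n Delta F C y)"

text \<open>N^desc(1,...): value at y = 1 of the Laurent polynomial, i.e. the limit y -> 1\<close>

definition Ndesc_at1 :: "nat \<Rightarrow> nat \<Rightarrow> nat \<Rightarrow> (nat \<Rightarrow> int \<times> int) \<Rightarrow> nat set \<Rightarrow>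
    (nat \<Rightarrow> real \<times> real) \<Rightarrow> (nat \<Rightarrow> real \<times> real) \<Rightarrow> real" where
  "Ndesc_at1 r s n Delta F P q = Lim (at (1::real)) (Ndesc r s n Delta F P q)"

definition alpha :: "(nat \<Rightarrow> int \<times> int) \<Rightarrow> nat set \<Rightarrow> nat \<Rightarrow> nat" where
  "alpha Delta F i = card {j \<in> F. weight Delta j = i}"

definition Ipow :: "(nat \<Rightarrow> nat) \<Rightarrow> real" where
  "Ipow \<alpha> = (\<Prod>i \<in> {i. \<alpha> i \<noteq> 0}. real i ^ \<alpha> i)"

definition desc_mult :: "nat \<Rightarrow> nat \<Rightarrow> (nat \<Rightarrow> int \<times> int) \<Rightarrow> curve \<Rightarrow> real" where
  "desc_mult m n Delta C = (\<Prod>u \<in> verts C - marked_vertices m C. mikh n Delta C u)"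

definition Ntrop :: "nat \<Rightarrow> nat \<Rightarrow> nat \<Rightarrow> (nat \<Rightarrow> int \<times> int) \<Rightarrow> nat set \<Rightarrow>
    (nat \<Rightarrow> real \<times> real) \<Rightarrow> (nat \<Rightarrow> real \<times> real) \<Rightarrow> (nat \<Rightarrow> nat) \<Rightarrow> real" where
  "Ntrop r s n Delta F P q \<alpha> =
     1 / Ipow \<alpha> * (1 / real (Gcard n Delta F)) *
     sum_classes (r + s) n
       {C. trop_desc r s n Delta C \<and> through (r + s) n Delta F P q C}
       (\<lambda>C. desc_mult (r + s) n Delta C)"

end

theory Submission
  imports Defs "HOL-Library.Function_Algebras"
begin

lemma arith1: "(A::nat) = v + B \<Longrightarrow> 4 \<le> v \<Longrightarrow> S \<le> B \<Longrightarrow> S = 3 * c \<Longrightarrow> c + 1 = d \<Longrightarrow> d + (r + s) = V \<Longrightarrow> 3 * V + 1 \<le> A + 3 * (r + s)"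
  by presburger
lemma arith2: "(T::nat) = 2 * E + (r + s + n) \<Longrightarrow> T = A + M \<Longrightarrow> M = 3 * r + 4 * s \<Longrightarrow> 3 * V + 1 \<le> A + 3 * (r + s)
  \<Longrightarrow> E + 1 = V \<Longrightarrow> r + 2 * s + f + 1 = n \<Longrightarrow> E + 2 < 2 * (r + s) + f"
  unfolding distrib_left by linarith


lemma ratio_lim:
  fixes f g :: "real \<Rightarrow> real"
  assumes "(f has_real_derivative a) (at 1)" "(g has_real_derivative b) (at 1)"
    "f 1 = 0" "g 1 = 0" "b \<noteq> 0"
  shows "((\<lambda>y. f y / g y) \<longlongrightarrow> a / b) (at 1)"
proof -
  have f: "((\<lambda>y. (f y - f 1) / (y - 1)) \<longlongrightarrow> a) (at 1)"
    using assms(1) has_field_derivative_iff by blast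
  have g: "((\<lambda>y. (g y - g 1) / (y - 1)) \<longlongrightarrow> b) (at 1)"
    using assms(2) has_field_derivative_iff by blast
  have "((\<lambda>y. ((f y - f 1) / (y - 1)) / ((g y - g 1) / (y - 1))) \<longlongrightarrow> a / b) (at 1)"
    by (rule tendsto_divide[OF f g assms(5)])
  moreover have "\<forall>\<^sub>F y in at 1. ((f y - f 1) / (y - 1)) / ((g y - g 1) / (y - 1)) = f y / g y"
    using eventually_at_ball[of 1 "1::real" UNIV]
    unfolding eventually_at
    by (auto intro!: exI[of _ 1] simp: assms(3,4))
  ultimately show ?thesis by (rule Lim_transform_eventually)
qed

lemma qnum_lim: "((\<lambda>y. qnum a y) \<longlongrightarrow> a) (at 1)"
proof -
  have d1: "((\<lambda>y. y powr (a/2) - y powr (-a/2)) has_real_derivative a) (at 1)"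
    by (auto intro!: derivative_eq_intros)
  have d2: "((\<lambda>y. y powr (1/2) - y powr (-1/2)) has_real_derivative 1) (at 1)"
    by (auto intro!: derivative_eq_intros)
  show ?thesis unfolding qnum_def
    using ratio_lim[OF d1 d2] by simp
qed

lemma qnum_plus_lim: "((\<lambda>y. qnum_plus a y) \<longlongrightarrow> 1) (at 1)"
proof -
  have "((\<lambda>y. qnum_plus a y) \<longlongrightarrow> qnum_plus a 1) (at 1)" unfolding qnum_plus_def
    by (intro tendsto_intros) auto
  then show ?thesis by (simp add: qnum_plus_def)
qed



definition endlim :: "(nat \<Rightarrow> int \<times> int) \<Rightarrow> nat set \<Rightarrow> nat \<Rightarrow> real" where
  "endlim Delta F j = (if j \<in> F \<and> odd (weight Delta j) then real (weight Delta j)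
     else if j \<notin> F \<and> odd (weight Delta j) then 1 / real (weight Delta j) else 1)"

lemma end_mult_lim:
  assumes "weight Delta j > 0"
  shows "((\<lambda>y. end_mult Delta F j y) \<longlongrightarrow> endlim Delta F j) (at 1)"
proof -
  define w where "w = weight Delta j"
  have wp: "real w > 0" using assms w_def by simp
  show ?thesis
  proof (cases "odd w")
    case True
    then have sg: "(-1::real) ^ w = -1" by simp
    show ?thesis
    proof (cases "j \<in> F")
      case True
      have "end_mult Delta F j = qnum (real w)"
        by (rule ext) (simp add: end_mult_def Let_def sg True w_def[symmetric] qnum_def)
      then show ?thesis using qnum_lim[of "real w"] \<open>odd w\<close> True
        by (simp add: endlim_def w_def)
    next
      case False
      have e: "end_mult Delta F j = (\<lambda>y. (y powr (real w/2) + y powr (-real w/2)) / (real w * (y powr (1/2) + y powr (-1/2))))"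
        by (rule ext) (simp add: end_mult_def Let_def sg False w_def[symmetric])
      have "((\<lambda>y. (y powr (real w/2) + y powr (-real w/2)) / (real w * (y powr (1/2) + y powr (-1/2)))) \<longlongrightarrow>
          (1 powr (real w/2) + 1 powr (-real w/2)) / (real w * (1 powr (1/2) + 1 powr (-1/2)))) (at 1)"
        using wp by (intro tendsto_intros) auto
      then show ?thesis using e False \<open>odd w\<close> wp by (simp add: endlim_def w_def)
    qed
  next
    case False
    then have sg: "(-1::real) ^ w = 1" by simp
    show ?thesis
    proof (cases "j \<in> F")
      case True
      have "end_mult Delta F j = qnum_plus (real w)"
        by (rule ext) (simp add: end_mult_def Let_def sg True w_def[symmetric] qnum_plus_def)
      then show ?thesis using qnum_plus_lim[of "real w"] \<open>\<not> odd w\<close> True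
        by (simp add: endlim_def w_def)
    next
      case False
      have e: "end_mult Delta F j = (\<lambda>y. qnum (real w) y / real w)"
        by (rule ext) (simp add: end_mult_def Let_def sg False w_def[symmetric] qnum_def)
      have "((\<lambda>y. qnum (real w) y / real w) \<longlongrightarrow> real w / real w) (at 1)"
        using wp by (intro tendsto_intros qnum_lim) auto
      then show ?thesis using e False \<open>\<not> odd w\<close> wp by (simp add: endlim_def w_def)
    qed
  qed
qed

lemma weight_pos: "Delta j \<noteq> (0,0) \<Longrightarrow> weight Delta j > 0"
  unfolding weight_def by (cases "Delta j") auto

lemma prod_endlim:
  assumes "F \<subseteq> {..<n}"
  shows "(\<Prod>j<n. endlim Delta F j) =
    (\<Prod>i \<in> {i \<in> F. odd (weight Delta i)}. real (weight Delta i)) /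
    (\<Prod>i \<in> {i. i < n \<and> i \<notin> F \<and> odd (weight Delta i)}. real (weight Delta i))"
proof -
  let ?A = "{i \<in> F. odd (weight Delta i)}" and ?B = "{i. i < n \<and> i \<notin> F \<and> odd (weight Delta i)}"
  have fF: "finite F" using assms finite_subset by blast
  have fin: "finite ?A" "finite ?B" using fF by auto
  have "(\<Prod>j<n. endlim Delta F j) = (\<Prod>j\<in>?A \<union> ?B. endlim Delta F j)"
    by (rule prod.mono_neutral_right) (use assms in \<open>auto simp: endlim_def\<close>)
  also have "\<dots> = (\<Prod>j\<in>?A. endlim Delta F j) * (\<Prod>j\<in>?B. endlim Delta F j)"
    by (rule prod.union_disjoint) (use fin in auto)
  also have "(\<Prod>j\<in>?A. endlim Delta F j) = (\<Prod>i\<in>?A. real (weight Delta i))"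
    by (rule prod.cong) (auto simp: endlim_def)
  also have "(\<Prod>j\<in>?B. endlim Delta F j) = (\<Prod>i\<in>?B. 1 / real (weight Delta i))"
    by (rule prod.cong) (auto simp: endlim_def)
  also have "\<dots> = 1 / (\<Prod>i\<in>?B. real (weight Delta i))"
    by (simp add: prod_dividef)
  finally show ?thesis by simp
qed



lemma other_eq: "u \<noteq> v \<Longrightarrow> other u {u, v} = v"
  unfolding other_def by (rule the_equality) auto

lemma degsum:
  assumes "finite V" "finite E" "\<forall>e\<in>E. e \<subseteq> V \<and> card e = 2"
  shows "(\<Sum>u\<in>V. card {e \<in> E. u \<in> e}) = 2 * card E"
proof -
  have "(\<Sum>u\<in>V. card {e \<in> E. u \<in> e}) = (\<Sum>u\<in>V. \<Sum>e\<in>E. if u \<in> e then 1 else 0)"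
    using assms by (simp add: sum.inter_filter[symmetric])
  also have "\<dots> = (\<Sum>e\<in>E. \<Sum>u\<in>V. if u \<in> e then 1 else 0)" by (rule sum.swap)
  also have "\<dots> = (\<Sum>e\<in>E. card e)"
  proof (rule sum.cong[OF refl])
    fix e assume "e \<in> E"
    then have "e \<subseteq> V" using assms by auto
    then have "{u \<in> V. u \<in> e} = e" by auto
    have "(\<Sum>u\<in>V. if u \<in> e then 1 else 0) = (\<Sum>u\<in>{u \<in> V. u \<in> e}. 1::nat)"
      by (rule sum.inter_filter[symmetric, OF assms(1)])
    then show "(\<Sum>u\<in>V. if u \<in> e then 1 else 0) = card e" using \<open>{u \<in> V. u \<in> e} = e\<close> by simp
  qed
  also have "\<dots> = 2 * card E" using assms by simp
  finally show ?thesis .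
qed

lemma tree_fin_edges: assumes "is_tree G" shows "finite (edges G)"
proof -
  have "edges G \<subseteq> Pow (verts G)" "finite (verts G)" using assms unfolding is_tree_def by auto
  then show ?thesis using finite_subset by blast
qed

lemma tree_flow:
  fixes \<delta> :: "nat \<Rightarrow> nat set \<Rightarrow> real \<times> real"
  shows "is_tree G \<Longrightarrow> (\<forall>e\<in>edges G. \<forall>u\<in>e. \<forall>v\<in>e. u \<noteq> v \<longrightarrow> \<delta> v e = - \<delta> u e) \<Longrightarrow>
    (\<forall>u\<in>verts G. (\<Sum>e\<in>edges_at G u. \<delta> u e) = 0) \<Longrightarrow> \<forall>e\<in>edges G. \<forall>u\<in>e. \<delta> u e = 0"
proof (induction "card (verts G)" arbitrary: G rule: less_induct)
  case less
  note tree = less.prems(1) and anti = less.prems(2) and div = less.prems(3)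
  show ?case
  proof (cases "edges G = {}")
    case True then show ?thesis by simp
  next
    case False
    have fV: "finite (verts G)" and eV: "\<forall>e\<in>edges G. e \<subseteq> verts G \<and> card e = 2"
      and conn: "\<forall>u \<in> verts G. \<forall>v \<in> verts G. (u, v) \<in> (adj G)\<^sup>*"
      and cnt: "card (edges G) + 1 = card (verts G)"
      using tree unfolding is_tree_def by auto
    have fE: "finite (edges G)" using tree by (rule tree_fin_edges)
    have ds: "(\<Sum>u\<in>verts G. card (edges_at G u)) = 2 * card (edges G)"
      unfolding edges_at_def by (rule degsum[OF fV fE eV])
    have "\<exists>u\<in>verts G. card (edges_at G u) < 2"
    proof (rule ccontr)
      assume "\<not> ?thesis"
      then have "\<forall>u\<in>verts G. 2 \<le> card (edges_at G u)" by force
      then have "(\<Sum>u\<in>verts G. 2) \<le> (\<Sum>u\<in>verts G. card (edges_at G u))"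
        by (intro sum_mono) auto
      then show False using ds cnt by simp
    qed
    then obtain u where u: "u \<in> verts G" "card (edges_at G u) < 2" by blast
    obtain e1 where e1: "e1 \<in> edges G" using False by blast
    then obtain a b where ab: "e1 = {a, b}" "a \<noteq> b" using eV by (meson card_2_iff)
    then have "a \<in> verts G" "b \<in> verts G" using eV e1 by auto
    then obtain w where w: "w \<in> verts G" "w \<noteq> u" using ab by metis
    have "(u, w) \<in> (adj G)\<^sup>*" using conn u w by blast
    then obtain z where "(u, z) \<in> adj G" using w(2) by (metis converse_rtranclE)
    then have "{u, z} \<in> edges_at G u" by (simp add: adj_def edges_at_def)
    moreover have "finite (edges_at G u)" using fE by (simp add: edges_at_def)
    ultimately have "card (edges_at G u) \<noteq> 0" by (metis card_0_eq empty_iff)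
    then have "card (edges_at G u) = 1" using u(2) by linarith
    then obtain e0 where e0: "edges_at G u = {e0}" by (meson card_1_singletonE)
    then have e0E: "e0 \<in> edges G" "u \<in> e0" by (auto simp: edges_at_def)
    then obtain w0 where w0: "e0 = {u, w0}" "w0 \<noteq> u" using eV
      by (metis card_2_iff insert_commute insert_iff singletonD)
    have w0V: "w0 \<in> verts G" using eV e0E w0 by auto
    have d1: "\<delta> u e0 = 0" using div u e0 by auto
    have A: "\<forall>a\<in>e0. \<forall>b\<in>e0. a \<noteq> b \<longrightarrow> \<delta> b e0 = - \<delta> a e0" by (rule bspec[OF anti e0E(1)])
    have w0in: "w0 \<in> e0" using w0 by simp
    have "\<delta> w0 e0 = - \<delta> u e0" using A[rule_format, OF e0E(2) w0in] w0(2) by metis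
    then have d2: "\<delta> w0 e0 = 0" using d1 by simp
    have uonly: "\<And>e. e \<in> edges G \<Longrightarrow> u \<in> e \<Longrightarrow> e = e0" using e0 by (auto simp: edges_at_def)
    define G' where "G' = G\<lparr>verts := verts G - {u}, edges := edges G - {e0}\<rparr>"
    have adj': "adj G' = {(x, y). {x, y} \<in> edges G - {e0}}" by (simp add: adj_def G'_def)
    have inv: "(z \<noteq> u \<longrightarrow> (x, z) \<in> (adj G')\<^sup>*) \<and> (z = u \<longrightarrow> (x, w0) \<in> (adj G')\<^sup>*)"
      if "(x, z) \<in> (adj G)\<^sup>*" "x \<noteq> u" for x z
      using that(1)
    proof (induction rule: rtrancl_induct)
      case base then show ?case using that(2) by simp
    next
      case (step y z)
      then have yz: "{y, z} \<in> edges G" by (simp add: adj_def)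
      show ?case
      proof (cases "y = u")
        case True
        show ?thesis
        proof (cases "z = u")
          case True
          then have "card {y, z} = 1" using \<open>y = u\<close> by simp
          then show ?thesis using eV yz by auto
        next
          case False
          then have "{y, z} = e0" using uonly yz True by auto
          then have "z = w0" using w0 False True by (metis doubleton_eq_iff)
          then show ?thesis using step True by auto
        qed
      next
        case False
        show ?thesis
        proof (cases "z = u")
          case True
          then have "{y, z} = e0" using uonly yz by auto
          then have "y = w0" using w0 False True by (metis doubleton_eq_iff)
          then show ?thesis using step True False by auto
        next
          case zu: False
          have "{y, z} \<noteq> e0" using False zu e0E by auto
          then have "(y, z) \<in> adj G'" using adj' yz by auto
          then show ?thesis using step False zu by auto
        qed
      qed
    qed
    have t1: "finite (verts G')" using fV by (simp add: G'_def)
    have t2: "verts G' \<noteq> {}" using w0V w0 by (auto simp: G'_def)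
    have t3: "\<forall>e\<in>edges G'. e \<subseteq> verts G' \<and> card e = 2"
    proof
      fix e assume "e \<in> edges G'"
      then have "e \<in> edges G" "e \<noteq> e0" by (auto simp: G'_def)
      then show "e \<subseteq> verts G' \<and> card e = 2" using uonly eV by (auto simp: G'_def)
    qed
    have t4: "\<forall>x \<in> verts G'. \<forall>y \<in> verts G'. (x, y) \<in> (adj G')\<^sup>*"
    proof (intro ballI)
      fix x y assume xy: "x \<in> verts G'" "y \<in> verts G'"
      then have "x \<in> verts G" "y \<in> verts G" "x \<noteq> u" "y \<noteq> u" by (auto simp: G'_def)
      then have "(x, y) \<in> (adj G)\<^sup>*" using conn by blast
      then show "(x, y) \<in> (adj G')\<^sup>*" using inv \<open>x \<noteq> u\<close> \<open>y \<noteq> u\<close> by blast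
    qed
    have t5: "card (edges G') + 1 = card (verts G')"
    proof -
      have "card (edges G') = card (edges G) - 1" using e0E fE by (simp add: G'_def)
      moreover have "card (verts G') = card (verts G) - 1" using u(1) fV by (simp add: G'_def)
      moreover have "card (edges G) \<ge> 1" using e0E fE by (metis card_0_eq empty_iff less_one not_le)
      ultimately show ?thesis using cnt by simp
    qed
    have tree': "is_tree G'" unfolding is_tree_def using t1 t2 t3 t4 t5 by blast
    have lt: "card (verts G') < card (verts G)"
    proof -
      have "card (verts G - {u}) < card (verts G)" by (rule card_Diff1_less[OF fV u(1)])
      then show ?thesis by (simp add: G'_def)
    qed
    have anti': "\<forall>e\<in>edges G'. \<forall>u\<in>e. \<forall>v\<in>e. u \<noteq> v \<longrightarrow> \<delta> v e = - \<delta> u e"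
    proof -
      have "edges G' \<subseteq> edges G" by (auto simp: G'_def)
      then show ?thesis using anti by blast
    qed
    have div': "\<forall>x\<in>verts G'. (\<Sum>e\<in>edges_at G' x. \<delta> x e) = 0"
    proof
      fix x assume x: "x \<in> verts G'"
      have ea: "edges_at G' x = edges_at G x - {e0}" by (auto simp: G'_def edges_at_def)
      have fx: "finite (edges_at G x)" using fE by (simp add: edges_at_def)
      have "(\<Sum>e\<in>edges_at G x - {e0}. \<delta> x e) = (\<Sum>e\<in>edges_at G x. \<delta> x e)"
      proof (cases "e0 \<in> edges_at G x")
        case True
        then have "x \<in> e0" by (simp add: edges_at_def)
        then have "x = w0" using x w0 by (auto simp: G'_def)
        then show ?thesis using sum_diff1[OF fx, of "\<delta> x" e0] True d2 by simp
      next
        case False then show ?thesis by simp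
      qed
      moreover have "x \<in> verts G" using x by (simp add: G'_def)
      ultimately show "(\<Sum>e\<in>edges_at G' x. \<delta> x e) = 0" using ea div by simp
    qed
    have IH: "\<forall>e\<in>edges G'. \<forall>u\<in>e. \<delta> u e = 0" using less.hyps[OF lt tree' anti' div'] .
    show ?thesis
    proof (intro ballI)
      fix e x assume "e \<in> edges G" "x \<in> e"
      show "\<delta> x e = 0"
      proof (cases "e = e0")
        case True then show ?thesis using \<open>x \<in> e\<close> w0 d1 d2 by auto
      next
        case False then show ?thesis using IH \<open>e \<in> edges G\<close> \<open>x \<in> e\<close> by (auto simp: G'_def)
      qed
    qed
  qed
qed



definition fsc :: "real \<Rightarrow> (nat \<Rightarrow> real) \<Rightarrow> (nat \<Rightarrow> real)" where
  "fsc c f = (\<lambda>t. c * f t)"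

lemma fsc_vs: "vector_space fsc"
  by unfold_locales (auto simp: fsc_def fun_eq_iff algebra_simps)

interpretation fv: vector_space fsc by (rule fsc_vs)

lemma sum_fun_apply: "(\<Sum>i\<in>I. f i) (t::nat) = (\<Sum>i\<in>I. f i t :: real)"
  by (induction I rule: infinite_finite_induct) auto

lemma LA:
  fixes b :: "'i \<Rightarrow> nat \<Rightarrow> real"
  assumes "finite I" "card I < k"
    and "\<forall>x\<in>S. \<exists>c. \<forall>t. x t = a t + (\<Sum>i\<in>I. c i * b i t)"
  shows "\<not> aff_dim_ge S k"
proof
  assume "aff_dim_ge S k"
  then obtain x :: "nat \<Rightarrow> nat \<Rightarrow> real" where xS: "\<forall>i \<le> k. x i \<in> S"
    and ind: "\<forall>c :: nat \<Rightarrow> real. (\<forall>t. (\<Sum>i \<in> {1..k}. c i * (x i t - x 0 t)) = 0) \<longrightarrow>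
        (\<forall>i \<in> {1..k}. c i = 0)"
    unfolding aff_dim_ge_def by blast
  define v where "v i = x i - x 0" for i
  have vt: "v i t = x i t - x 0 t" for i t by (simp add: v_def)
  have "\<forall>i. \<exists>c. i \<le> k \<longrightarrow> (\<forall>t. x i t = a t + (\<Sum>j\<in>I. c j * b j t))"
    using xS assms(3) by blast
  then have "\<exists>cc. \<forall>i. i \<le> k \<longrightarrow> (\<forall>t. x i t = a t + (\<Sum>j\<in>I. cc i j * b j t))" by (rule choice)
  then obtain cc where cc0: "\<forall>i. i \<le> k \<longrightarrow> (\<forall>t. x i t = a t + (\<Sum>j\<in>I. cc i j * b j t))" by blast
  have cc: "\<And>i t. i \<le> k \<Longrightarrow> x i t = a t + (\<Sum>j\<in>I. cc i j * b j t)" using cc0 by blast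
  have sp: "v i \<in> fv.span (b ` I)" if "i \<le> k" for i
  proof -
    have "v i = (\<Sum>j\<in>I. fsc (cc i j - cc 0 j) (b j))"
    proof (rule ext)
      fix t
      have "v i t = (\<Sum>j\<in>I. cc i j * b j t) - (\<Sum>j\<in>I. cc 0 j * b j t)"
        using cc[of i t] cc[of 0 t] that by (simp add: vt)
      also have "\<dots> = (\<Sum>j\<in>I. (cc i j - cc 0 j) * b j t)"
        by (simp add: sum_subtractf[symmetric] left_diff_distrib)
      also have "\<dots> = (\<Sum>j\<in>I. fsc (cc i j - cc 0 j) (b j)) t"
        by (simp add: sum_fun_apply fsc_def)
      finally show "v i t = (\<Sum>j\<in>I. fsc (cc i j - cc 0 j) (b j)) t" .
    qed
    also have "\<dots> \<in> fv.span (b ` I)"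
      by (intro fv.span_sum fv.span_scale fv.span_base) auto
    finally show ?thesis .
  qed
  have inj: "inj_on v {1..k}"
  proof (rule inj_onI, rule ccontr)
    fix i j assume ij: "i \<in> {1..k}" "j \<in> {1..k}" "v i = v j" "i \<noteq> j"
    define c where "c l = (if l = i then 1 else if l = j then -1 else (0::real))" for l
    have "\<forall>t. (\<Sum>l \<in> {1..k}. c l * (x l t - x 0 t)) = 0"
    proof
      fix t
      have "(\<Sum>l \<in> {1..k}. c l * (x l t - x 0 t)) = (\<Sum>l \<in> {i, j}. c l * (x l t - x 0 t))"
        by (rule sum.mono_neutral_right) (use ij in \<open>auto simp: c_def\<close>)
      also have "\<dots> = v i t - v j t" using ij(4) by (simp add: c_def vt)
      finally show "(\<Sum>l \<in> {1..k}. c l * (x l t - x 0 t)) = 0" using ij by simp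
    qed
    then have "c i = 0" using ind ij by blast
    then show False by (simp add: c_def)
  qed
  have indep: "fv.independent (v ` {1..k})"
  proof
    assume "fv.dependent (v ` {1..k})"
    then obtain u where u: "\<exists>w \<in> v ` {1..k}. u w \<noteq> 0" "(\<Sum>w\<in>v ` {1..k}. fsc (u w) w) = 0"
      using fv.dependent_finite by blast
    define c where "c l = u (v l)" for l
    have "\<forall>t. (\<Sum>l \<in> {1..k}. c l * (x l t - x 0 t)) = 0"
    proof
      fix t
      have r: "(\<Sum>w\<in>v ` {1..k}. u w * w t) = (\<Sum>l\<in>{1..k}. u (v l) * v l t)"
        by (subst sum.reindex[OF inj]) (simp add: o_def)
      have "(\<Sum>l \<in> {1..k}. c l * (x l t - x 0 t)) = (\<Sum>w\<in>v ` {1..k}. fsc (u w) w) t"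
        unfolding sum_fun_apply fsc_def r by (simp add: c_def vt)
      then show "(\<Sum>l \<in> {1..k}. c l * (x l t - x 0 t)) = 0" using u(2) by simp
    qed
    then have "\<forall>l\<in>{1..k}. c l = 0" using ind by blast
    then show False using u(1) by (auto simp: c_def)
  qed
  have "finite (v ` {1..k}) \<and> card (v ` {1..k}) \<le> card (b ` I)"
    by (rule fv.independent_span_bound) (use assms(1) indep sp in auto)
  then have "k \<le> card (b ` I)" using card_image[OF inj] by simp
  also have "\<dots> \<le> card I" by (rule card_image_le[OF assms(1)])
  finally show False using assms(2) by simp
qed



definition rel :: "nat \<Rightarrow> nat \<Rightarrow> (nat \<Rightarrow> int \<times> int) \<Rightarrow> curve \<Rightarrow> curve \<Rightarrow> (nat \<Rightarrow> nat) \<Rightarrow> bool" where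
  "rel m n Delta C D \<phi> \<longleftrightarrow> is_curve m n Delta D \<and> bij_betw \<phi> (verts C) (verts D) \<and>
     bij_betw (\<lambda>e. \<phi> ` e) (edges C) (edges D) \<and> (\<forall>l\<in>labs m n. att D l = \<phi> (att C l))"

lemma dir_anti: "u \<noteq> v \<Longrightarrow> dir C v {u, v} = - dir C u {u, v}"
proof -
  assume uv: "u \<noteq> v"
  have "other u {u, v} = v" using uv by (rule other_eq)
  moreover have "other v {u, v} = u" using other_eq[of v u] uv by (simp add: insert_commute)
  ultimately show ?thesis unfolding dir_def by (simp add: scaleR_diff_right)
qed

lemma edge_pair: "is_curve m n Delta C \<Longrightarrow> e \<in> edges C \<Longrightarrow> \<exists>a b. a \<noteq> b \<and> e = {a, b} \<and> a \<in> verts C \<and> b \<in> verts C"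
  unfolding is_curve_def is_tree_def by (metis card_2_iff insert_subset)

lemma edge_pair2: "is_curve m n Delta C \<Longrightarrow> e \<in> edges C \<Longrightarrow> u \<in> e \<Longrightarrow> \<exists>v. v \<noteq> u \<and> e = {u, v} \<and> u \<in> verts C \<and> v \<in> verts C"
  by (drule (1) edge_pair) (metis insert_commute insert_iff singletonD)

lemma rel_dir:
  assumes C: "is_curve m n Delta C" and R: "rel m n Delta C D \<phi>"
  shows "\<forall>e\<in>edges C. \<forall>u\<in>e. dir D (\<phi> u) (\<phi> ` e) = dir C u e"
proof -
  have D: "is_curve m n Delta D" and bv: "bij_betw \<phi> (verts C) (verts D)"
    and be: "bij_betw (\<lambda>e. \<phi> ` e) (edges C) (edges D)" and at: "\<forall>l\<in>labs m n. att D l = \<phi> (att C l)"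
    using R by (auto simp: rel_def)
  have injv: "inj_on \<phi> (verts C)" using bv by (simp add: bij_betw_def)
  have eVC: "\<forall>e\<in>edges C. e \<subseteq> verts C" using C by (simp add: is_curve_def is_tree_def)
  define \<delta> where "\<delta> u e = dir D (\<phi> u) (\<phi> ` e) - dir C u e" for u e
  have tC: "is_tree C" using C by (simp add: is_curve_def)
  have anti: "\<forall>e\<in>edges C. \<forall>u\<in>e. \<forall>v\<in>e. u \<noteq> v \<longrightarrow> \<delta> v e = - \<delta> u e"
  proof (intro ballI impI)
    fix e u v assume e: "e \<in> edges C" "u \<in> e" "v \<in> e" "u \<noteq> v"
    then obtain w where w: "w \<noteq> u" "e = {u, w}" using edge_pair2[OF C] by blast
    then have vw: "v = w" using e by auto
    have "u \<in> verts C" "v \<in> verts C" using e eVC by auto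
    then have "\<phi> u \<noteq> \<phi> v" using injv e(4) by (meson inj_on_def)
    moreover have "\<phi> ` e = {\<phi> u, \<phi> v}" using w vw by auto
    ultimately have "dir D (\<phi> v) (\<phi> ` e) = - dir D (\<phi> u) (\<phi> ` e)" using dir_anti by metis
    moreover have "dir C v e = - dir C u e" using dir_anti e(4) w vw by metis
    ultimately show "\<delta> v e = - \<delta> u e" by (simp add: \<delta>_def)
  qed
  have div: "\<forall>u\<in>verts C. (\<Sum>e\<in>edges_at C u. \<delta> u e) = 0"
  proof
    fix u assume u: "u \<in> verts C"
    have balC: "(\<Sum>e \<in> edges_at C u. dir C u e) + (\<Sum>j \<in> {j. j < n \<and> att C (Y j) = u}. rvec (Delta j)) = 0"
      using C u by (simp add: is_curve_def)
    have "\<phi> u \<in> verts D" using bv u by (auto simp: bij_betw_def)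
    then have balD: "(\<Sum>e \<in> edges_at D (\<phi> u). dir D (\<phi> u) e) + (\<Sum>j \<in> {j. j < n \<and> att D (Y j) = \<phi> u}. rvec (Delta j)) = 0"
      using D by (simp add: is_curve_def)
    have ea: "edges_at D (\<phi> u) = (\<lambda>e. \<phi> ` e) ` edges_at C u"
    proof
      show "edges_at D (\<phi> u) \<subseteq> (\<lambda>e. \<phi> ` e) ` edges_at C u"
      proof
        fix e' assume "e' \<in> edges_at D (\<phi> u)"
        then have e': "e' \<in> edges D" "\<phi> u \<in> e'" by (auto simp: edges_at_def)
        have "e' \<in> (\<lambda>e. \<phi> ` e) ` edges C" using be e' by (simp add: bij_betw_def)
        then obtain e where e: "e \<in> edges C" "e' = \<phi> ` e" by blast
        then obtain x where "x \<in> e" "\<phi> x = \<phi> u" using e' by auto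
        moreover have "x \<in> verts C" using eVC e(1) \<open>x \<in> e\<close> by blast
        ultimately have "x = u" using inj_onD[OF injv _ _ u] by blast
        then show "e' \<in> (\<lambda>e. \<phi> ` e) ` edges_at C u" using e \<open>x \<in> e\<close> by (auto simp: edges_at_def)
      qed
      show "(\<lambda>e. \<phi> ` e) ` edges_at C u \<subseteq> edges_at D (\<phi> u)"
        using be by (auto simp: edges_at_def bij_betw_def)
    qed
    have "edges_at C u \<subseteq> edges C" by (auto simp: edges_at_def)
    then have injE: "inj_on (\<lambda>e. \<phi> ` e) (edges_at C u)"
      using bij_betw_imp_inj_on[OF be] inj_on_subset by blast
    have sD: "(\<Sum>e \<in> edges_at D (\<phi> u). dir D (\<phi> u) e) = (\<Sum>e \<in> edges_at C u. dir D (\<phi> u) (\<phi> ` e))"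
      unfolding ea by (simp add: sum.reindex[OF injE])
    have ends: "{j. j < n \<and> att D (Y j) = \<phi> u} = {j. j < n \<and> att C (Y j) = u}"
    proof (intro Collect_cong conj_cong refl)
      fix j assume "j < n"
      then have l: "Y j \<in> labs m n" by (simp add: labs_def)
      then have "att D (Y j) = \<phi> (att C (Y j))" using at by blast
      moreover have "att C (Y j) \<in> verts C" using C l by (simp add: is_curve_def)
      ultimately show "(att D (Y j) = \<phi> u) = (att C (Y j) = u)" using inj_on_eq_iff[OF injv _ u] by simp
    qed
    have "(\<Sum>e\<in>edges_at C u. \<delta> u e) = (\<Sum>e \<in> edges_at C u. dir D (\<phi> u) (\<phi> ` e)) - (\<Sum>e \<in> edges_at C u. dir C u e)"
      by (simp add: \<delta>_def sum_subtractf)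
    also have "\<dots> = 0"
    proof -
      have a: "(\<Sum>e \<in> edges_at C u. dir C u e) = - (\<Sum>j \<in> {j. j < n \<and> att C (Y j) = u}. rvec (Delta j))"
        using balC by (simp add: eq_neg_iff_add_eq_0)
      have b: "(\<Sum>e \<in> edges_at C u. dir D (\<phi> u) (\<phi> ` e)) = - (\<Sum>j \<in> {j. j < n \<and> att C (Y j) = u}. rvec (Delta j))"
        using balD unfolding sD ends by (simp add: eq_neg_iff_add_eq_0)
      show ?thesis unfolding a b by simp
    qed
    finally show "(\<Sum>e\<in>edges_at C u. \<delta> u e) = 0" .
  qed
  have "\<forall>e\<in>edges C. \<forall>u\<in>e. \<delta> u e = 0" by (rule tree_flow[OF tC anti div])
  then show ?thesis by (simp add: \<delta>_def)
qed



definition gdir :: "curve \<Rightarrow> nat set \<Rightarrow> real \<times> real" where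
  "gdir C e = dir C (SOME x. x \<in> e) e"

definition sgn_e :: "nat \<Rightarrow> nat set \<Rightarrow> real" where
  "sgn_e u e = (if u = (SOME x. x \<in> e) then 1 else -1)"

lemma dir_gdir:
  assumes "u \<noteq> w" shows "dir C u {u, w} = sgn_e u {u, w} *\<^sub>R gdir C {u, w}"
proof -
  have "(SOME x. x \<in> {u, w}) \<in> {u, w}" by (rule someI[of _ u]) simp
  then consider "(SOME x. x \<in> {u, w}) = u" | "(SOME x. x \<in> {u, w}) = w" by blast
  then show ?thesis
  proof cases
    case 1 then show ?thesis by (simp add: sgn_e_def gdir_def)
  next
    case 2
    then have "gdir C {u, w} = dir C w {u, w}" by (simp add: gdir_def)
    also have "\<dots> = - dir C u {u, w}" using dir_anti[OF assms] .
    finally show ?thesis using 2 assms by (simp add: sgn_e_def)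
  qed
qed

lemma edge_step:
  assumes C: "is_curve m n Delta C" and R: "rel m n Delta C D \<phi>"
    and e: "{u, w} \<in> edges C" and uw: "u \<noteq> w"
  shows "pos D (\<phi> w) = pos D (\<phi> u) + len D (\<phi> ` {u, w}) *\<^sub>R dir C u {u, w}"
proof -
  have D: "is_curve m n Delta D" and bv: "bij_betw \<phi> (verts C) (verts D)"
    and be: "bij_betw (\<lambda>e. \<phi> ` e) (edges C) (edges D)"
    using R by (auto simp: rel_def)
  have "\<phi> ` {u, w} \<in> (\<lambda>e. \<phi> ` e) ` edges C" using e by blast
  then have eD: "\<phi> ` {u, w} \<in> edges D" using be by (simp add: bij_betw_def)
  then have L: "len D (\<phi> ` {u, w}) > 0" using D by (simp add: is_curve_def)
  have "u \<in> verts C" "w \<in> verts C" using C e by (auto simp: is_curve_def is_tree_def)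
  then have ne: "\<phi> u \<noteq> \<phi> w" using bij_betw_imp_inj_on[OF bv] uw by (meson inj_onD)
  have im: "\<phi> ` {u, w} = {\<phi> u, \<phi> w}" by simp
  have "dir C u {u, w} = dir D (\<phi> u) (\<phi> ` {u, w})" using rel_dir[OF C R] e by auto
  also have "\<dots> = (1 / len D (\<phi> ` {u, w})) *\<^sub>R (pos D (\<phi> w) - pos D (\<phi> u))"
    unfolding dir_def im other_eq[OF ne] ..
  finally have "len D (\<phi> ` {u, w}) *\<^sub>R dir C u {u, w} = pos D (\<phi> w) - pos D (\<phi> u)"
    using L by simp
  then show ?thesis by (simp add: algebra_simps)
qed

lemma pos_param:
  assumes C: "is_curve m n Delta C" and "(\<rho>, v) \<in> (adj C)\<^sup>*"
  shows "\<exists>\<kappa>. \<forall>D \<phi>. rel m n Delta C D \<phi> \<longrightarrow>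
     pos D (\<phi> v) = pos D (\<phi> \<rho>) + (\<Sum>e\<in>edges C. (\<kappa> e * len D (\<phi> ` e)) *\<^sub>R gdir C e)"
  using assms(2)
proof (induction rule: rtrancl_induct)
  case base
  show ?case by (rule exI[of _ "\<lambda>e. 0"]) simp
next
  case (step y z)
  then obtain \<kappa> where k: "\<forall>D \<phi>. rel m n Delta C D \<phi> \<longrightarrow>
     pos D (\<phi> y) = pos D (\<phi> \<rho>) + (\<Sum>e\<in>edges C. (\<kappa> e * len D (\<phi> ` e)) *\<^sub>R gdir C e)" by blast
  have e: "{y, z} \<in> edges C" using step(2) by (simp add: adj_def)
  then have "card {y, z} = 2" using C by (simp add: is_curve_def is_tree_def)
  then have yz: "y \<noteq> z" by auto
  have fE: "finite (edges C)" using C tree_fin_edges by (simp add: is_curve_def)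
  define \<kappa>' where "\<kappa>' e' = \<kappa> e' + (if e' = {y, z} then sgn_e y {y, z} else 0)" for e'
  show ?case
  proof (rule exI[of _ \<kappa>'], intro allI impI)
    fix D \<phi> assume R: "rel m n Delta C D \<phi>"
    have "pos D (\<phi> z) = pos D (\<phi> y) + len D (\<phi> ` {y, z}) *\<^sub>R dir C y {y, z}"
      by (rule edge_step[OF C R e yz])
    also have "\<dots> = pos D (\<phi> \<rho>) + (\<Sum>e\<in>edges C. (\<kappa> e * len D (\<phi> ` e)) *\<^sub>R gdir C e)
        + (sgn_e y {y, z} * len D (\<phi> ` {y, z})) *\<^sub>R gdir C {y, z}"
      using k R by (simp add: dir_gdir[OF yz])
    finally have h1: "pos D (\<phi> z) = pos D (\<phi> \<rho>) + ((\<Sum>e\<in>edges C. (\<kappa> e * len D (\<phi> ` e)) *\<^sub>R gdir C e)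
        + (sgn_e y {y, z} * len D (\<phi> ` {y, z})) *\<^sub>R gdir C {y, z})" by (simp add: add.assoc)
    have eq: "(\<Sum>e\<in>edges C. (\<kappa> e * len D (\<phi> ` e)) *\<^sub>R gdir C e)
        + (sgn_e y {y, z} * len D (\<phi> ` {y, z})) *\<^sub>R gdir C {y, z}
        = (\<Sum>e\<in>edges C. (\<kappa>' e * len D (\<phi> ` e)) *\<^sub>R gdir C e)"
    proof -
      have "(\<Sum>e\<in>edges C. (\<kappa>' e * len D (\<phi> ` e)) *\<^sub>R gdir C e) =
          (\<Sum>e\<in>edges C. (\<kappa> e * len D (\<phi> ` e)) *\<^sub>R gdir C e) +
          (\<Sum>e\<in>edges C. (if e = {y, z} then (sgn_e y {y, z} * len D (\<phi> ` e)) *\<^sub>R gdir C e else 0))"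
        unfolding sum.distrib[symmetric] by (rule sum.cong) (auto simp: \<kappa>'_def algebra_simps scaleR_add_left)
      also have "(\<Sum>e\<in>edges C. (if e = {y, z} then (sgn_e y {y, z} * len D (\<phi> ` e)) *\<^sub>R gdir C e else 0))
          = (sgn_e y {y, z} * len D (\<phi> ` {y, z})) *\<^sub>R gdir C {y, z}"
        using sum.delta[OF fE, of "{y, z}" "\<lambda>e. (sgn_e y {y, z} * len D (\<phi> ` e)) *\<^sub>R gdir C e"] e by simp
      finally show ?thesis by simp
    qed
    show "pos D (\<phi> z) = pos D (\<phi> \<rho>) + (\<Sum>e\<in>edges C. (\<kappa>' e * len D (\<phi> ` e)) *\<^sub>R gdir C e)"
      using h1 eq by simp
  qed
qed



definition ell :: "nat \<Rightarrow> (nat \<Rightarrow> int \<times> int) \<Rightarrow> nat set \<Rightarrow> nat \<Rightarrow> real \<times> real \<Rightarrow> real" where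
  "ell m Delta F k z = (if k < 2 * m then (if even k then fst z else snd z)
      else if k - 2 * m \<in> F then det2 (rvec (Delta (k - 2 * m))) z else 0)"

definition vtx :: "nat \<Rightarrow> curve \<Rightarrow> nat \<Rightarrow> nat" where
  "vtx m C k = (if k < 2 * m then att C (X (k div 2)) else att C (Y (k - 2 * m)))"

lemma ell_lin: "linear (ell m Delta F k)"
  by (rule linearI) (auto simp: ell_def det2_def algebra_simps)

lemma evF_ell:
  assumes R: "rel m n Delta C D \<phi>" and F: "F \<subseteq> {..<n}"
  shows "evF m Delta F D k = ell m Delta F k (pos D (\<phi> (vtx m C k)))"
proof -
  have at: "\<forall>l\<in>labs m n. att D l = \<phi> (att C l)" using R by (simp add: rel_def)
  show ?thesis
  proof (cases "k < 2 * m")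
    case True
    then have "X (k div 2) \<in> labs m n" by (simp add: labs_def)
    then show ?thesis using True at by (simp add: evF_def ell_def vtx_def)
  next
    case False
    show ?thesis
    proof (cases "k - 2 * m \<in> F")
      case True
      then have "Y (k - 2 * m) \<in> labs m n" using F by (auto simp: labs_def)
      then show ?thesis using True False at by (simp add: evF_def ell_def vtx_def)
    next
      case f2: False
      then show ?thesis using False by (simp add: evF_def ell_def)
    qed
  qed
qed

lemma ell_out:
  assumes C: "is_curve m n Delta C" and F: "F \<subseteq> {..<n}" and "vtx m C k \<notin> verts C"
  shows "ell m Delta F k z = 0"
proof -
  have lv: "\<And>l. l \<in> labs m n \<Longrightarrow> att C l \<in> verts C" using C by (simp add: is_curve_def)
  show ?thesis
  proof (cases "k < 2 * m")
    case True
    then have "X (k div 2) \<in> labs m n" by (simp add: labs_def)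
    then show ?thesis using lv assms(3) True by (simp add: vtx_def)
  next
    case False
    show ?thesis
    proof (cases "k - 2 * m \<in> F")
      case True
      then have "Y (k - 2 * m) \<in> labs m n" using F by (auto simp: labs_def)
      then show ?thesis using lv assms(3) False True by (simp add: vtx_def)
    next
      case f2: False
      then show ?thesis using False by (simp add: ell_def)
    qed
  qed
qed

lemma same_type_rel:
  "is_curve m n Delta D \<Longrightarrow> same_type m n C D \<Longrightarrow> \<exists>\<phi>. rel m n Delta C D \<phi>"
  unfolding same_type_def rel_def by blast

lemma case_b:
  assumes C: "is_curve m n Delta C" and F: "F \<subseteq> {..<n}"
    and cnt: "card (edges C) + 2 < 2 * m + card F"
  shows "\<not> aff_dim_ge (evF m Delta F ` {D. is_curve m n Delta D \<and> same_type m n C D}) (2 * m + card F)"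
proof -
  have tC: "is_tree C" using C by (simp add: is_curve_def)
  then obtain \<rho> where \<rho>: "\<rho> \<in> verts C" unfolding is_tree_def by blast
  have fE: "finite (edges C)" using tC by (rule tree_fin_edges)
  have ex: "\<forall>v\<in>verts C. \<exists>\<kappa>. \<forall>D \<phi>. rel m n Delta C D \<phi> \<longrightarrow>
     pos D (\<phi> v) = pos D (\<phi> \<rho>) + (\<Sum>e\<in>edges C. (\<kappa> e * len D (\<phi> ` e)) *\<^sub>R gdir C e)"
  proof
    fix v assume "v \<in> verts C"
    then have "(\<rho>, v) \<in> (adj C)\<^sup>*" using tC \<rho> by (simp add: is_tree_def)
    then show "\<exists>\<kappa>. \<forall>D \<phi>. rel m n Delta C D \<phi> \<longrightarrow>
     pos D (\<phi> v) = pos D (\<phi> \<rho>) + (\<Sum>e\<in>edges C. (\<kappa> e * len D (\<phi> ` e)) *\<^sub>R gdir C e)"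
      by (rule pos_param[OF C])
  qed
  then obtain K where K: "\<forall>v\<in>verts C. \<forall>D \<phi>. rel m n Delta C D \<phi> \<longrightarrow>
     pos D (\<phi> v) = pos D (\<phi> \<rho>) + (\<Sum>e\<in>edges C. (K v e * len D (\<phi> ` e)) *\<^sub>R gdir C e)"
    using bchoice[OF ex] by blast
  let ?l = "ell m Delta F"
  define I :: "(bool + nat set) set" where "I = {Inl False, Inl True} \<union> Inr ` edges C"
  define b :: "bool + nat set \<Rightarrow> nat \<Rightarrow> real" where
    "b i t = (case i of Inl False \<Rightarrow> ?l t (1, 0) | Inl True \<Rightarrow> ?l t (0, 1)
       | Inr e \<Rightarrow> ?l t (K (vtx m C t) e *\<^sub>R gdir C e))" for i t
  have fI: "finite I" using fE by (simp add: I_def)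
  have cI: "card I = card (edges C) + 2"
  proof -
    have "card I = card {Inl False, Inl True :: bool + nat set} + card (Inr ` edges C :: (bool + nat set) set)"
      unfolding I_def by (rule card_Un_disjoint) (use fE in auto)
    also have "card (Inr ` edges C :: (bool + nat set) set) = card (edges C)"
      by (rule card_image) (simp add: inj_on_def)
    finally show ?thesis by simp
  qed
  show ?thesis
  proof (rule LA[where I = I and b = b and a = "\<lambda>t. 0"])
    show "finite I" by (rule fI)
    show "card I < 2 * m + card F" using cI cnt by simp
    show "\<forall>x\<in>evF m Delta F ` {D. is_curve m n Delta D \<and> same_type m n C D}.
        \<exists>c. \<forall>t. x t = 0 + (\<Sum>i\<in>I. c i * b i t)"
    proof
      fix x assume "x \<in> evF m Delta F ` {D. is_curve m n Delta D \<and> same_type m n C D}"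
      then obtain D where D: "is_curve m n Delta D" "same_type m n C D" "x = evF m Delta F D" by blast
      then obtain \<phi> where R: "rel m n Delta C D \<phi>" using same_type_rel by blast
      define p where "p = pos D (\<phi> \<rho>)"
      define c where "c i = (case i of Inl False \<Rightarrow> fst p | Inl True \<Rightarrow> snd p | Inr e \<Rightarrow> len D (\<phi> ` e))" for i
      have "\<forall>t. x t = 0 + (\<Sum>i\<in>I. c i * b i t)"
      proof
        fix t
        have sI: "(\<Sum>i\<in>I. c i * b i t) = fst p * ?l t (1, 0) + snd p * ?l t (0, 1) +
            (\<Sum>e\<in>edges C. len D (\<phi> ` e) * ?l t (K (vtx m C t) e *\<^sub>R gdir C e))"
        proof -
          have "(\<Sum>i\<in>I. c i * b i t) = (\<Sum>i\<in>{Inl False, Inl True}. c i * b i t) + (\<Sum>i\<in>Inr ` edges C. c i * b i t)"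
            unfolding I_def by (rule sum.union_disjoint) (use fE in auto)
          also have "(\<Sum>i\<in>Inr ` edges C. c i * b i t) = (\<Sum>e\<in>edges C. len D (\<phi> ` e) * ?l t (K (vtx m C t) e *\<^sub>R gdir C e))"
            by (subst sum.reindex) (auto simp: inj_on_def c_def b_def)
          finally show ?thesis by (simp add: c_def b_def)
        qed
        show "x t = 0 + (\<Sum>i\<in>I. c i * b i t)"
        proof (cases "vtx m C t \<in> verts C")
          case True
          have "x t = ?l t (pos D (\<phi> (vtx m C t)))" using D(3) evF_ell[OF R F] by simp
          also have "\<dots> = ?l t (p + (\<Sum>e\<in>edges C. (K (vtx m C t) e * len D (\<phi> ` e)) *\<^sub>R gdir C e))"
            using K True R by (simp add: p_def)
          also have "\<dots> = ?l t p + (\<Sum>e\<in>edges C. len D (\<phi> ` e) * ?l t (K (vtx m C t) e *\<^sub>R gdir C e))"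
          proof -
            have lin: "linear (?l t)" by (rule ell_lin)
            have "\<And>e. ?l t ((K (vtx m C t) e * len D (\<phi> ` e)) *\<^sub>R gdir C e) = len D (\<phi> ` e) * ?l t (K (vtx m C t) e *\<^sub>R gdir C e)"
            proof -
              fix e
              have "(K (vtx m C t) e * len D (\<phi> ` e)) *\<^sub>R gdir C e = len D (\<phi> ` e) *\<^sub>R (K (vtx m C t) e *\<^sub>R gdir C e)"
                by (simp add: mult.commute)
              then show "?l t ((K (vtx m C t) e * len D (\<phi> ` e)) *\<^sub>R gdir C e) = len D (\<phi> ` e) * ?l t (K (vtx m C t) e *\<^sub>R gdir C e)"
                using linear_scale[OF lin] by simp
            qed
            then show ?thesis by (simp only: linear_add[OF lin] linear_sum[OF lin])
          qed
          also have "?l t p = fst p * ?l t (1, 0) + snd p * ?l t (0, 1)"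
          proof -
            show ?thesis by (simp add: ell_def det2_def)
          qed
          finally show ?thesis using sI by simp
        next
          case False
          have z: "\<And>z. ?l t z = 0" using ell_out[OF C F False] .
          have "x t = 0" using D(3) evF_ell[OF R F] z by simp
          then show ?thesis using sI z by simp
        qed
      qed
      then show "\<exists>c. \<forall>t. x t = 0 + (\<Sum>i\<in>I. c i * b i t)" by blast
    qed
  qed
qed



lemma labsum:
  assumes "finite V" "finite L" "\<forall>l\<in>L. f l \<in> V"
  shows "(\<Sum>u\<in>V. card {l \<in> L. f l = u}) = card L"
proof -
  have "(\<Sum>u\<in>V. card {l \<in> L. f l = u}) = (\<Sum>u\<in>V. \<Sum>l\<in>L. if f l = u then 1 else 0)"
  proof (rule sum.cong[OF refl])
    fix u
    have "(\<Sum>l\<in>L. if f l = u then 1 else 0) = (\<Sum>l\<in>{l \<in> L. f l = u}. 1::nat)"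
      by (rule sum.inter_filter[symmetric, OF assms(2)])
    then show "card {l \<in> L. f l = u} = (\<Sum>l\<in>L. if f l = u then 1 else 0)" by simp
  qed
  also have "\<dots> = (\<Sum>l\<in>L. \<Sum>u\<in>V. if f l = u then 1 else 0)" by (rule sum.swap)
  also have "\<dots> = (\<Sum>l\<in>L. 1)"
  proof (rule sum.cong[OF refl])
    fix l assume "l \<in> L"
    then have "f l \<in> V" using assms by blast
    then show "(\<Sum>u\<in>V. if f l = u then 1 else 0) = (1::nat)"
      using sum.delta'[OF assms(1), of "f l" "\<lambda>_. 1::nat"] by simp
  qed
  finally show ?thesis by simp
qed

lemma card_labs: "card (labs m n) = m + n"
proof -
  have "card (labs m n) = card (X ` {..<m}) + card (Y ` {..<n})"
    unfolding labs_def by (rule card_Un_disjoint) auto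
  also have "card (X ` {..<m}) = m" by (subst card_image) (auto simp: inj_on_def)
  also have "card (Y ` {..<n}) = n" by (subst card_image) (auto simp: inj_on_def)
  finally show ?thesis .
qed

lemma val_total:
  assumes C: "is_curve m n Delta C"
  shows "(\<Sum>u\<in>verts C. valence m n C u) = 2 * card (edges C) + (m + n)"
proof -
  have tC: "is_tree C" using C by (simp add: is_curve_def)
  have fV: "finite (verts C)" using tC by (simp add: is_tree_def)
  have fE: "finite (edges C)" using tC by (rule tree_fin_edges)
  have eV: "\<forall>e\<in>edges C. e \<subseteq> verts C \<and> card e = 2" using tC by (simp add: is_tree_def)
  have fL: "finite (labs m n)" by (simp add: labs_def)
  have "(\<Sum>u\<in>verts C. valence m n C u) = (\<Sum>u\<in>verts C. card (edges_at C u)) + (\<Sum>u\<in>verts C. card {l \<in> labs m n. att C l = u})"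
    unfolding valence_def by (rule sum.distrib)
  also have "(\<Sum>u\<in>verts C. card (edges_at C u)) = 2 * card (edges C)"
    unfolding edges_at_def by (rule degsum[OF fV fE eV])
  also have "(\<Sum>u\<in>verts C. card {l \<in> labs m n. att C l = u}) = card (labs m n)"
    by (rule labsum[OF fV fL]) (use C in \<open>simp add: is_curve_def\<close>)
  finally show ?thesis by (simp add: card_labs)
qed

lemma case_count:
  assumes C: "is_curve (r + s) n Delta C"
    and v3: "\<forall>i < r. valence (r + s) n C (att C (X i)) = 3"
    and v4: "\<forall>i. r \<le> i \<and> i < r + s \<longrightarrow> valence (r + s) n C (att C (X i)) = 4"
    and inj: "inj_on (\<lambda>i. att C (X i)) {..<r + s}"
    and u0: "u0 \<in> verts C - marked_vertices (r + s) C" "valence (r + s) n C u0 \<noteq> 3"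
    and hyp: "r + 2 * s + card F + 1 = n"
  shows "card (edges C) + 2 < 2 * (r + s) + card F"
proof -
  let ?val = "valence (r + s) n C"
  let ?M = "marked_vertices (r + s) C"
  have tC: "is_tree C" using C by (simp add: is_curve_def)
  have fV: "finite (verts C)" using tC by (simp add: is_tree_def)
  have cV: "card (edges C) + 1 = card (verts C)" using tC by (simp add: is_tree_def)
  have MV: "?M \<subseteq> verts C" using C by (auto simp: marked_vertices_def is_curve_def labs_def)
  have cM: "card ?M = r + s" unfolding marked_vertices_def using card_image[OF inj] by simp
  have ge3: "\<forall>u\<in>verts C. ?val u \<ge> 3" using C by (simp add: is_curve_def)
  have tot: "(\<Sum>u\<in>verts C. ?val u) = 2 * card (edges C) + (r + s + n)" by (rule val_total[OF C])
  have split: "(\<Sum>u\<in>verts C. ?val u) = (\<Sum>u\<in>verts C - ?M. ?val u) + (\<Sum>u\<in>?M. ?val u)"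
    by (rule sum.subset_diff[OF MV fV])
  have sM: "(\<Sum>u\<in>?M. ?val u) = 3 * r + 4 * s"
  proof -
    have "(\<Sum>u\<in>?M. ?val u) = (\<Sum>i<r + s. ?val (att C (X i)))"
      unfolding marked_vertices_def by (subst sum.reindex[OF inj]) simp
    also have "\<dots> = (\<Sum>i\<in>{0..<r}. ?val (att C (X i))) + (\<Sum>i\<in>{r..<r + s}. ?val (att C (X i)))"
      by (simp add: lessThan_atLeast0 sum.atLeastLessThan_concat)
    also have "(\<Sum>i\<in>{0..<r}. ?val (att C (X i))) = (\<Sum>i\<in>{0..<r}. 3)"
      by (rule sum.cong) (use v3 in auto)
    also have "(\<Sum>i\<in>{r..<r + s}. ?val (att C (X i))) = (\<Sum>i\<in>{r..<r + s}. 4)"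
      by (rule sum.cong) (use v4 in auto)
    finally show ?thesis by simp
  qed
  have fD: "finite (verts C - ?M)" using fV by simp
  have "(\<Sum>u\<in>verts C - ?M. ?val u) = ?val u0 + (\<Sum>u\<in>verts C - ?M - {u0}. ?val u)"
    by (rule sum.remove[OF fD u0(1)])
  moreover have "?val u0 \<ge> 4" using ge3 u0 by force
  moreover have "(\<Sum>u\<in>verts C - ?M - {u0}. ?val u) \<ge> (\<Sum>u\<in>verts C - ?M - {u0}. 3)"
    by (rule sum_mono) (use ge3 in auto)
  moreover have "(\<Sum>u\<in>verts C - ?M - {u0}. (3::nat)) = 3 * card (verts C - ?M - {u0})" by simp
  moreover have "card (verts C - ?M - {u0}) + 1 = card (verts C - ?M)"
    using fD u0(1) by (metis card_Diff1_less card_Diff_singleton_if less_imp_le_nat add.commute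
        Suc_diff_1 card_gt_0_iff empty_iff plus_1_eq_Suc)
  moreover have "card (verts C - ?M) + (r + s) = card (verts C)"
    using card_Diff_subset[OF _ MV] MV fV cM card_mono[OF fV MV] by (metis finite_subset le_add_diff_inverse2)
  ultimately have "(\<Sum>u\<in>verts C - ?M. ?val u) + 3 * (r + s) \<ge> 3 * card (verts C) + 1"
    by (rule arith1)
  then show ?thesis using arith2[OF tot split sM _ cV hyp] by blast
qed



lemma case_a:
  assumes C: "is_curve m n Delta C" and F: "F \<subseteq> {..<n}"
    and ij: "i < m" "j < m" "i \<noteq> j" and eq: "att C (X i) = att C (X j)"
  shows "\<not> aff_dim_ge (evF m Delta F ` {D. is_curve m n Delta D \<and> same_type m n C D}) (2 * m + card F)"
proof -
  have fF: "finite F" using F finite_subset by blast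
  define W where "W = {..<2 * m} \<union> (\<lambda>f. 2 * m + f) ` F"
  define J where "J = W - {2 * j, 2 * j + 1}"
  define b :: "nat \<Rightarrow> nat \<Rightarrow> real" where
    "b t \<tau> = (if \<tau> = t then 1 else 0) + (if t = 2 * i \<and> \<tau> = 2 * j then 1 else 0)
       + (if t = 2 * i + 1 \<and> \<tau> = 2 * j + 1 then 1 else 0)" for t \<tau>
  have fW: "finite W" using fF by (simp add: W_def)
  have cW: "card W = 2 * m + card F"
  proof -
    have "card W = card {..<2 * m} + card ((\<lambda>f. 2 * m + f) ` F)"
      unfolding W_def by (rule card_Un_disjoint) (use fF in auto)
    also have "card ((\<lambda>f. 2 * m + f) ` F) = card F" by (rule card_image) (simp add: inj_on_def)
    finally show ?thesis by simp
  qed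
  have jW: "2 * j \<in> W" "2 * j + 1 \<in> W" using ij by (auto simp: W_def)
  have cJ: "card J + 2 = card W"
  proof -
    have "card J = card W - card {2 * j, 2 * j + 1}"
      unfolding J_def by (rule card_Diff_subset) (use jW in auto)
    moreover have "card {2 * j, 2 * j + 1} = 2" by simp
    moreover have "card W \<ge> 2" using cW ij by simp
    ultimately show ?thesis by simp
  qed
  have fJ: "finite J" using fW by (simp add: J_def)
  have iJ: "2 * i \<in> J" "2 * i + 1 \<in> J" using ij by (auto simp: J_def W_def)
  show ?thesis
  proof (rule LA[where I = J and b = b and a = "\<lambda>t. 0"])
    show "finite J" by (rule fJ)
    show "card J < 2 * m + card F" using cJ cW by simp
    show "\<forall>x\<in>evF m Delta F ` {D. is_curve m n Delta D \<and> same_type m n C D}.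
        \<exists>c. \<forall>t. x t = 0 + (\<Sum>t'\<in>J. c t' * b t' t)"
    proof
      fix x assume "x \<in> evF m Delta F ` {D. is_curve m n Delta D \<and> same_type m n C D}"
      then obtain D where D: "is_curve m n Delta D" "same_type m n C D" "x = evF m Delta F D" by blast
      then obtain \<phi> where R: "rel m n Delta C D \<phi>" using same_type_rel by blast
      have at: "\<forall>l\<in>labs m n. att D l = \<phi> (att C l)" using R by (simp add: rel_def)
      have attD: "att D (X i) = att D (X j)" using at eq ij by (simp add: labs_def)
      have x1: "x (2 * j) = x (2 * i)" using D(3) ij attD by (simp add: evF_def)
      have x2: "x (2 * j + 1) = x (2 * i + 1)" using D(3) ij attD by (simp add: evF_def)
      have x0: "x \<tau> = 0" if "\<tau> \<notin> W" for \<tau>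
      proof -
        have "\<not> \<tau> < 2 * m" using that by (simp add: W_def)
        moreover have "\<tau> - 2 * m \<notin> F"
        proof
          assume "\<tau> - 2 * m \<in> F"
          then have "2 * m + (\<tau> - 2 * m) \<in> W" by (simp add: W_def)
          then show False using that \<open>\<not> \<tau> < 2 * m\<close> by simp
        qed
        ultimately show ?thesis using D(3) by (simp add: evF_def)
      qed
      have "\<forall>\<tau>. x \<tau> = 0 + (\<Sum>t\<in>J. x t * b t \<tau>)"
      proof
        fix \<tau>
        show "x \<tau> = 0 + (\<Sum>t\<in>J. x t * b t \<tau>)"
        proof (cases "\<tau> \<in> J")
          case True
          then have "\<tau> \<noteq> 2 * j" "\<tau> \<noteq> 2 * j + 1" by (auto simp: J_def)
          then have "(\<Sum>t\<in>J. x t * b t \<tau>) = (\<Sum>t\<in>J. if t = \<tau> then x t else 0)"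
            by (intro sum.cong) (auto simp: b_def)
          also have "\<dots> = x \<tau>" using sum.delta[OF fJ, of \<tau> x] True by simp
          finally show ?thesis by simp
        next
          case False
          show ?thesis
          proof (cases "\<tau> = 2 * j")
            case True
            then have "(\<Sum>t\<in>J. x t * b t \<tau>) = (\<Sum>t\<in>J. if t = 2 * i then x t else 0)"
              using False by (intro sum.cong) (auto simp: b_def)
            also have "\<dots> = x (2 * i)" using sum.delta[OF fJ, of "2 * i" x] iJ by simp
            finally show ?thesis using x1 True by simp
          next
            case nj: False
            show ?thesis
            proof (cases "\<tau> = 2 * j + 1")
              case True
              then have "(\<Sum>t\<in>J. x t * b t \<tau>) = (\<Sum>t\<in>J. if t = 2 * i + 1 then x t else 0)"
                using False by (intro sum.cong) (auto simp: b_def)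
              also have "\<dots> = x (2 * i + 1)" using sum.delta[OF fJ, of "2 * i + 1" x] iJ by simp
              finally show ?thesis using x2 True by simp
            next
              case nj1: False
              then have "\<tau> \<notin> W" using False nj by (auto simp: J_def)
              moreover have "(\<Sum>t\<in>J. x t * b t \<tau>) = 0"
                using False nj nj1 by (intro sum.neutral) (auto simp: b_def)
              ultimately show ?thesis using x0 by simp
            qed
          qed
        qed
      qed
      then show "\<exists>c. \<forall>t. x t = 0 + (\<Sum>t'\<in>J. c t' * b t' t)" by blast
    qed
  qed
qed



lemma degen_refl: "is_curve m n Delta C \<Longrightarrow> degenerates m n C C"
  unfolding degenerates_def
proof (rule exI[of _ id], intro conjI ballI)
  assume C: "is_curve m n Delta C"
  fix e assume "e \<in> edges C"
  then have "card e = 2" using C by (simp add: is_curve_def is_tree_def)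
  then show "card (id ` e) = 1 \<or> id ` e \<in> edges C" using \<open>e \<in> edges C\<close> by simp
next
  fix e' assume "e' \<in> edges C"
  then show "\<exists>!e. e \<in> edges C \<and> id ` e = e'" by auto
qed simp_all

lemma evF_cond:
  assumes "through m n Delta F P q C"
  shows "evF m Delta F C = cond_vec m Delta F P q"
proof
  fix k
  show "evF m Delta F C k = cond_vec m Delta F P q k"
  proof (cases "k < 2 * m")
    case True
    then have "k div 2 < m" by simp
    then have "pos C (att C (X (k div 2))) = P (k div 2)" using assms by (simp add: through_def)
    then show ?thesis using True by (simp add: evF_def cond_vec_def)
  next
    case False
    show ?thesis
    proof (cases "k - 2 * m \<in> F")
      case True
      then obtain t where t: "pos C (att C (Y (k - 2 * m))) = q (k - 2 * m) + t *\<^sub>R rvec (Delta (k - 2 * m))"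
        using assms by (auto simp: through_def)
      have "det2 (rvec (Delta (k - 2 * m))) (pos C (att C (Y (k - 2 * m)))) = det2 (rvec (Delta (k - 2 * m))) (q (k - 2 * m))"
        unfolding t by (simp add: det2_def algebra_simps)
      then show ?thesis using False True by (simp add: evF_def cond_vec_def)
    next
      case f2: False
      then show ?thesis using False by (simp add: evF_def cond_vec_def)
    qed
  qed
qed

lemma key:
  assumes "\<forall>j < n. Delta j \<noteq> (0, 0)" "F \<subseteq> {..<n}" "r + 2 * s + card F + 1 = n"
    "general_position r s n Delta F P q"
    "refined_desc r s n Delta C" "through (r + s) n Delta F P q C"
  shows "trop_desc r s n Delta C"
proof (rule ccontr)
  assume nt: "\<not> trop_desc r s n Delta C"
  have C: "is_curve (r + s) n Delta C" and v3: "\<forall>i < r. valence (r + s) n C (att C (X i)) = 3"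
    and v4: "\<forall>i. r \<le> i \<and> i < r + s \<longrightarrow> valence (r + s) n C (att C (X i)) = 4"
    using assms(5) by (auto simp: refined_desc_def)
  from nt obtain u0 where u0: "u0 \<in> verts C - marked_vertices (r + s) C" "valence (r + s) n C u0 \<noteq> 3"
    using assms(5) by (auto simp: trop_desc_def)
  have ev: "evF (r + s) Delta F C = cond_vec (r + s) Delta F P q" by (rule evF_cond[OF assms(6)])
  have nd: "\<not> aff_dim_ge (evF (r + s) Delta F ` {D. is_curve (r + s) n Delta D \<and> same_type (r + s) n C D})
             (2 * (r + s) + card F)"
  proof (cases "inj_on (\<lambda>i. att C (X i)) {..<r + s}")
    case True
    have "card (edges C) + 2 < 2 * (r + s) + card F"
      by (rule case_count[OF C v3 v4 True u0 assms(3)])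
    then show ?thesis by (rule case_b[OF C assms(2)])
  next
    case False
    then obtain i j where "i < r + s" "j < r + s" "i \<noteq> j" "att C (X i) = att C (X j)"
      unfolding inj_on_def by auto
    then show ?thesis by (rule case_a[OF C assms(2)])
  qed
  have "\<exists>D. refined_desc r s n Delta D \<and> degenerates (r + s) n D C"
    using assms(5) degen_refl[OF C] by blast
  then have "evF (r + s) Delta F C \<noteq> cond_vec (r + s) Delta F P q"
    using assms(4) C nd unfolding general_position_def by blast
  then show False using ev by simp
qed



lemma iso_refl: "iso m n C C"
  unfolding iso_def by (rule exI[of _ id]) (auto simp: bij_betw_def)

lemma vert_mult_lim:
  "((\<lambda>y. vert_mult r s n Delta C u y) \<longlongrightarrow>
     (if u \<in> marked_vertices (r + s) C then 1 else mikh n Delta C u)) (at 1)"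
proof (cases "u \<in> marked_vertices (r + s) C")
  case True
  then obtain i where i: "i < r + s" "att C (X i) = u" by (auto simp: marked_vertices_def)
  show ?thesis
  proof (cases "\<exists>i < r. att C (X i) = u")
    case True
    then show ?thesis using \<open>u \<in> marked_vertices (r + s) C\<close> by (simp add: vert_mult_def)
  next
    case False
    then have "\<exists>i. r \<le> i \<and> i < r + s \<and> att C (X i) = u" using i by (metis not_le)
    then have "vert_mult r s n Delta C u = qnum_plus (mikh n Delta C u)"
      using False by (intro ext) (simp only: vert_mult_def if_not_P[OF False] if_P if_False)
    then show ?thesis using True qnum_plus_lim by simp
  qed
next
  case False
  then have "\<not> (\<exists>i < r. att C (X i) = u)" "\<not> (\<exists>i. r \<le> i \<and> i < r + s \<and> att C (X i) = u)"
    by (auto simp: marked_vertices_def)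
  then have "vert_mult r s n Delta C u = qnum (mikh n Delta C u)"
    by (intro ext) (simp only: vert_mult_def if_False)
  then show ?thesis using False qnum_lim by simp
qed

lemma curve_mult_lim:
  assumes "\<forall>j < n. Delta j \<noteq> (0, 0)" "finite (verts C)"
  shows "((\<lambda>y. curve_mult r s n Delta F C y) \<longlongrightarrow>
     (\<Prod>j<n. endlim Delta F j) * desc_mult (r + s) n Delta C) (at 1)"
proof -
  have e: "((\<lambda>y. \<Prod>j<n. end_mult Delta F j y) \<longlongrightarrow> (\<Prod>j<n. endlim Delta F j)) (at 1)"
  proof (rule tendsto_prod)
    fix j assume "j \<in> {..<n}"
    then have "weight Delta j > 0" using assms(1) weight_pos by auto
    then show "((\<lambda>y. end_mult Delta F j y) \<longlongrightarrow> endlim Delta F j) (at 1)" by (rule end_mult_lim)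
  qed
  have v: "((\<lambda>y. \<Prod>u \<in> verts C. vert_mult r s n Delta C u y) \<longlongrightarrow>
     (\<Prod>u \<in> verts C. (if u \<in> marked_vertices (r + s) C then 1 else mikh n Delta C u))) (at 1)"
    by (rule tendsto_prod) (rule vert_mult_lim)
  have "((\<lambda>y. curve_mult r s n Delta F C y) \<longlongrightarrow>
     (\<Prod>j<n. endlim Delta F j) * (\<Prod>u \<in> verts C. (if u \<in> marked_vertices (r + s) C then 1 else mikh n Delta C u))) (at 1)"
    unfolding curve_mult_def by (rule tendsto_mult[OF e v])
  moreover have "(\<Prod>u \<in> verts C. (if u \<in> marked_vertices (r + s) C then 1 else mikh n Delta C u))
      = desc_mult (r + s) n Delta C"
  proof -
    have "(\<Prod>u \<in> verts C. (if u \<in> marked_vertices (r + s) C then 1 else mikh n Delta C u))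
       = (\<Prod>u \<in> verts C - marked_vertices (r + s) C. (if u \<in> marked_vertices (r + s) C then 1 else mikh n Delta C u))"
      by (rule prod.mono_neutral_right) (use assms(2) in auto)
    also have "\<dots> = desc_mult (r + s) n Delta C"
      unfolding desc_mult_def by (rule prod.cong) auto
    finally show ?thesis .
  qed
  ultimately show ?thesis by simp
qed

lemma Ipow_nz:
  assumes "\<forall>j < n. Delta j \<noteq> (0, 0)" "F \<subseteq> {..<n}"
  shows "Ipow (alpha Delta F) \<noteq> 0"
proof (cases "finite {i. alpha Delta F i \<noteq> 0}")
  case True
  have ball: "\<forall>i \<in> {i. alpha Delta F i \<noteq> 0}. real i ^ alpha Delta F i \<noteq> 0"
  proof
    fix i assume "i \<in> {i. alpha Delta F i \<noteq> 0}"
    then have "card {j \<in> F. weight Delta j = i} \<noteq> 0" unfolding mem_Collect_eq alpha_def .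
    then have "{j \<in> F. weight Delta j = i} \<noteq> {}" by (metis card.empty)
    then obtain j where j: "j \<in> F" "weight Delta j = i" by blast
    then have "j < n" using assms(2) by auto
    then have "Delta j \<noteq> (0, 0)" using assms(1) by blast
    then have "weight Delta j > 0" by (rule weight_pos)
    then have "i > 0" using j by simp
    then show "real i ^ alpha Delta F i \<noteq> 0" by simp
  qed
  have "(\<Prod>i \<in> {i. alpha Delta F i \<noteq> 0}. real i ^ alpha Delta F i) \<noteq> 0"
    unfolding prod_zero_iff[OF True] using ball by blast
  then show ?thesis unfolding Ipow_def .
next
  case False
  then show ?thesis by (simp add: Ipow_def)
qed

theorem lemma3p25:
  fixes r s n :: nat and Delta :: "nat \<Rightarrow> int \<times> int" and F :: "nat set"
    and P q :: "nat \<Rightarrow> real \<times> real"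
  assumes "\<forall>j < n. Delta j \<noteq> (0, 0)"
    and "F \<subseteq> {..<n}"
    and "r + 2 * s + card F + 1 = n"
    and "general_position r s n Delta F P q"
  shows "Ndesc_at1 r s n Delta F P q =
           (\<Prod>i \<in> {i \<in> F. odd (weight Delta i)}. real (weight Delta i)) /
           (\<Prod>i \<in> {i. i < n \<and> i \<notin> F \<and> odd (weight Delta i)}. real (weight Delta i)) *
           Ipow (alpha Delta F) * Ntrop r s n Delta F P q (alpha Delta F)"
proof -
  define S where "S = {C. trop_desc r s n Delta C \<and> through (r + s) n Delta F P q C}"
  have S: "{C. refined_desc r s n Delta C \<and> through (r + s) n Delta F P q C} = S"
    unfolding S_def using key[OF assms] by (auto simp: trop_desc_def)
  define R where "R = {(C, D). C \<in> S \<and> D \<in> S \<and> iso (r + s) n C D}"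
  define Q where "Q = S // R"
  define E where "E = (\<Prod>j<n. endlim Delta F j)"
  define G where "G = real (Gcard n Delta F)"
  have rep: "(SOME C. C \<in> K) \<in> S" if "K \<in> Q" for K
  proof -
    from that obtain x where x: "x \<in> S" "K = R `` {x}" unfolding Q_def quotient_def by blast
    then have "x \<in> K" by (simp add: R_def iso_refl)
    then have "(SOME C. C \<in> K) \<in> K" by (rule someI)
    then show ?thesis using x by (auto simp: R_def)
  qed
  have Nd: "Ndesc r s n Delta F P q = (\<lambda>y. 1 / G * (\<Sum>K\<in>Q. curve_mult r s n Delta F (SOME C. C \<in> K) y))"
    by (rule ext) (simp add: Ndesc_def S sum_classes_def G_def Q_def R_def)
  have lim: "(Ndesc r s n Delta F P q \<longlongrightarrow> 1 / G * (\<Sum>K\<in>Q. E * desc_mult (r + s) n Delta (SOME C. C \<in> K))) (at 1)"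
  proof (cases "finite Q")
    case True
    show ?thesis unfolding Nd E_def
    proof (intro tendsto_mult tendsto_const tendsto_sum curve_mult_lim)
      fix K assume "K \<in> Q"
      then have "(SOME C. C \<in> K) \<in> S" by (rule rep)
      then show "finite (verts (SOME C. C \<in> K))"
        by (simp add: S_def trop_desc_def refined_desc_def is_curve_def is_tree_def)
    qed (use assms in auto)
  next
    case False
    show ?thesis unfolding Nd sum.infinite[OF False] by (rule tendsto_const)
  qed
  have "Ndesc_at1 r s n Delta F P q = 1 / G * (\<Sum>K\<in>Q. E * desc_mult (r + s) n Delta (SOME C. C \<in> K))"
    unfolding Ndesc_at1_def using lim by (rule tendsto_Lim[rotated]) simp
  also have "\<dots> = E * Ipow (alpha Delta F) * Ntrop r s n Delta F P q (alpha Delta F)"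
  proof -
    have nt: "Ntrop r s n Delta F P q (alpha Delta F) = 1 / Ipow (alpha Delta F) * (1 / G) *
        (\<Sum>K\<in>Q. desc_mult (r + s) n Delta (SOME C. C \<in> K))"
      unfolding Ntrop_def sum_classes_def S_def[symmetric] R_def[symmetric] Q_def[symmetric] G_def ..
    have "1 / G * (\<Sum>K\<in>Q. E * desc_mult (r + s) n Delta (SOME C. C \<in> K))
       = E * (1 / G * (\<Sum>K\<in>Q. desc_mult (r + s) n Delta (SOME C. C \<in> K)))"
      by (simp only: sum_distrib_left[symmetric] mult.left_commute)
    then show ?thesis using Ipow_nz[OF assms(1,2)] unfolding nt by simp
  qed
  finally show ?thesis unfolding E_def prod_endlim[OF assms(2)] .
qed


end
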